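(* Let $v_1,\ldots,v_n$ be integers with $v_i\geq 2$, let $Q$ be the $n\times n$ tridiagonal matrix with $Q_{ii}=-v_i$, $Q_{i,i+1}=Q_{i+1,i}=1$ and all other entries $0$, and let $f:\mathbb{R}^n\to\mathbb{R}$, $f(z)=z^TQ^{-1}z$. Let $y=(-v_1+2,\ldots,-v_n+2)$. Then for every $x\in\mathbb{R}^n$ with $|x_i|\leq|y_i|$ for all $i$ and $|x_{i_0}|<|y_{i_0}|$ for at least one index $i_0$, we have $f(x)>f(y)$.
   Context: In the paper $y$ is the vector of rotation numbers of a Legendrian chain of unknots giving a universally tight structure on $L(p,q)$ with $-p/q=[-v_1,\ldots,-v_n]$, and $x$ ranges over rotation vectors of virtually overtwisted structures; the statement above is the purely algebraic content. *)

theory Defs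
  imports "Jordan_Normal_Form.Matrix"
begin

text \<open>Indices are 0-based: entry i of the paper corresponds to index i-1 here.
  Q is the n x n tridiagonal matrix with diagonal -v_i and 1 on the off-diagonals.\<close>
definition tridiag_Q :: "nat \<Rightarrow> (nat \<Rightarrow> int) \<Rightarrow> real mat" where
  "tridiag_Q n v = mat n n (\<lambda>(i, j).
      if i = j then - real_of_int (v i)
      else if j = i + 1 \<or> i = j + 1 then 1 else 0)"

definition mat_inv :: "nat \<Rightarrow> real mat \<Rightarrow> real mat" where
  "mat_inv n A = (THE B. B \<in> carrier_mat n n \<and> inverts_mat A B \<and> inverts_mat B A)"

definition qf :: "nat \<Rightarrow> (nat \<Rightarrow> int) \<Rightarrow> real vec \<Rightarrow> real" where
  "qf n v z = z \<bullet> (mat_inv n (tridiag_Q n v) *\<^sub>v z)"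

definition yvec :: "nat \<Rightarrow> (nat \<Rightarrow> int) \<Rightarrow> real vec" where
  "yvec n v = vec n (\<lambda>i. - real_of_int (v i) + 2)"

end

theory Submission
  imports Defs "Jordan_Normal_Form.Determinant"
begin

definition LL :: "nat \<Rightarrow> (nat \<Rightarrow> int) \<Rightarrow> (nat \<Rightarrow> real) \<Rightarrow> nat \<Rightarrow> real" where
  "LL n v z i = - real_of_int (v i) * z i + (if 0 < i then z (i - 1) else 0)
     + (if i + 1 < n then z (i + 1) else 0)"

lemma h1: "(\<Sum>i<Suc m. a i * (if 0 < i then b (i - 1) else 0)) = (\<Sum>i<m. a (Suc i) * (b i :: real))"
  by (simp only: sum.lessThan_Suc_shift) simp

lemma h2: "(\<Sum>i<Suc m. a i * (if i + 1 < Suc m then b (i + 1) else 0)) = (\<Sum>i<m. a i * (b (Suc i) :: real))"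
  by (simp add: sum.lessThan_Suc)

lemma LL_formula:
  "(\<Sum>i<n. a i * LL n v b i) = (\<Sum>i<n. - real_of_int (v i) * a i * b i)
     + (\<Sum>i<n - 1. a i * b (Suc i) + a (Suc i) * b i)"
proof (cases n)
  case 0 then show ?thesis by simp
next
  case (Suc m)
  have "(\<Sum>i<n. a i * LL n v b i) = (\<Sum>i<n. - real_of_int (v i) * a i * b i)
     + (\<Sum>i<n. a i * (if 0 < i then b (i - 1) else 0))
     + (\<Sum>i<n. a i * (if i + 1 < n then b (i + 1) else 0))"
    unfolding LL_def distrib_left sum.distrib by (simp add: mult_ac)
  also have "\<dots> = (\<Sum>i<n. - real_of_int (v i) * a i * b i)
     + (\<Sum>i<m. a (Suc i) * b i) + (\<Sum>i<m. a i * b (Suc i))"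
    unfolding Suc h1 h2 by simp
  finally show ?thesis using Suc by (simp add: sum.distrib algebra_simps)
qed

lemma LL_sym: "(\<Sum>i<n. a i * LL n v b i) = (\<Sum>i<n. b i * LL n v a i)"
  unfolding LL_formula by (simp add: algebra_simps)

lemma LL_diff: "LL n v (\<lambda>i. a i - b i) i = LL n v a i - LL n v b i"
  unfolding LL_def by (simp add: algebra_simps)

lemma sq_identity:
  "(\<Sum>i<Suc m. 2 * (z i)^2) - 2 * (\<Sum>i<m. z i * z (Suc i))
    = (z 0)^2 + (z m)^2 + (\<Sum>i<m. (z i - z (Suc i))^2 :: real)"
  by (induction m) (simp_all add: power2_eq_square algebra_simps)

lemma NN_le:
  assumes v: "\<forall>i<n. v i \<ge> 2"
  shows "(\<Sum>i<n. z i * LL n v z i) \<le> 0"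
    and "(\<Sum>i<n. z i * LL n v z i) = 0 \<Longrightarrow> \<forall>i<n. z i = 0"
proof -
  have "(\<Sum>i<n. z i * LL n v z i) = (\<Sum>i<n. - real_of_int (v i) * z i * z i)
     + (\<Sum>i<n - 1. z i * z (Suc i) + z (Suc i) * z i)" by (rule LL_formula)
  also have "(\<Sum>i<n. - real_of_int (v i) * z i * z i) = (\<Sum>i<n. - ((real_of_int (v i) - 2) * (z i)^2 + 2 * (z i)^2))"
    by (rule sum.cong) (auto simp: power2_eq_square algebra_simps)
  also have "\<dots> = - (\<Sum>i<n. (real_of_int (v i) - 2) * (z i)^2) - (\<Sum>i<n. 2 * (z i)^2)"
    by (simp add: sum_subtractf sum_negf)
  also have "(\<Sum>i<n - 1. z i * z (Suc i) + z (Suc i) * z i) = (\<Sum>i<n - 1. 2 * (z i * z (Suc i)))"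
    by (rule sum.cong) auto
  also have "\<dots> = 2 * (\<Sum>i<n - 1. z i * z (Suc i))"
    by (simp add: sum_distrib_left)
  also have "- (\<Sum>i<n. (real_of_int (v i) - 2) * (z i)^2) - (\<Sum>i<n. 2 * (z i)^2) + 2 * (\<Sum>i<n - 1. z i * z (Suc i))
    = - (\<Sum>i<n. (real_of_int (v i) - 2) * (z i)^2)
     - ((\<Sum>i<n. 2 * (z i)^2) - 2 * (\<Sum>i<n - 1. z i * z (Suc i)))" by simp
  finally have eq: "(\<Sum>i<n. z i * LL n v z i) = - (\<Sum>i<n. (real_of_int (v i) - 2) * (z i)^2)
     - ((\<Sum>i<n. 2 * (z i)^2) - 2 * (\<Sum>i<n - 1. z i * z (Suc i)))" .
  have p1: "(\<Sum>i<n. (real_of_int (v i) - 2) * (z i)^2) \<ge> 0"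
    by (rule sum_nonneg) (use v in auto)
  have p2: "(\<Sum>i<n. 2 * (z i)^2) - 2 * (\<Sum>i<n - 1. z i * z (Suc i)) \<ge> 0
     \<and> ((\<Sum>i<n. 2 * (z i)^2) - 2 * (\<Sum>i<n - 1. z i * z (Suc i)) = 0 \<longrightarrow> (\<forall>i<n. z i = 0))"
  proof (cases n)
    case 0 then show ?thesis by simp
  next
    case (Suc m)
    have S: "(\<Sum>i<n. 2 * (z i)^2) - 2 * (\<Sum>i<n - 1. z i * z (Suc i))
      = (z 0)^2 + (z m)^2 + (\<Sum>i<m. (z i - z (Suc i))^2)"
      using sq_identity[where m=m and z=z] Suc by simp
    have nn: "(\<Sum>i<m. (z i - z (Suc i))^2) \<ge> 0" by (rule sum_nonneg) auto
    have "(z 0)^2 + (z m)^2 + (\<Sum>i<m. (z i - z (Suc i))^2) = 0 \<longrightarrow> (\<forall>i<n. z i = 0)"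
    proof
      assume h: "(z 0)^2 + (z m)^2 + (\<Sum>i<m. (z i - z (Suc i))^2) = 0"
      have "(z 0)^2 = 0" using h nn
        by (smt (verit) zero_le_power2)
      then have z0: "z 0 = 0" by simp
      have "(\<Sum>i<m. (z i - z (Suc i))^2) = 0" using h nn
        by (smt (verit) zero_le_power2)
      then have "\<forall>i\<in>{..<m}. (z i - z (Suc i))^2 = 0"
        by (subst (asm) sum_nonneg_eq_0_iff) auto
      then have st: "\<forall>i<m. z (Suc i) = z i" by auto
      have "\<forall>i. i < n \<longrightarrow> z i = 0"
      proof
        fix i show "i < n \<longrightarrow> z i = 0"
          by (induction i) (use z0 st Suc in auto)
      qed
      then show "\<forall>i<n. z i = 0" by blast
    qed
    then show ?thesis using S nn by (smt (verit) zero_le_power2)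
  qed
  show "(\<Sum>i<n. z i * LL n v z i) \<le> 0" using eq p1 p2 by linarith
  show "(\<Sum>i<n. z i * LL n v z i) = 0 \<Longrightarrow> \<forall>i<n. z i = 0"
  proof -
    assume h0: "(\<Sum>i<n. z i * LL n v z i) = 0"
    have "(\<Sum>i<n. 2 * (z i)^2) - 2 * (\<Sum>i<n - 1. z i * z (Suc i)) = 0" using eq p1 p2 h0 by linarith
    then show ?thesis using p2 by blast
  qed
qed

lemma NN_abs:
  "(\<Sum>i<n. z i * LL n v z i) \<le> (\<Sum>i<n. \<bar>z i\<bar> * LL n v (\<lambda>j. \<bar>z j\<bar>) i)"
proof -
  have "(\<Sum>i<n - 1. z i * z (Suc i) + z (Suc i) * z i)
      \<le> (\<Sum>i<n - 1. \<bar>z i\<bar> * \<bar>z (Suc i)\<bar> + \<bar>z (Suc i)\<bar> * \<bar>z i\<bar>)"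
    by (rule sum_mono) (metis abs_ge_self abs_mult add_mono mult.commute)
  moreover have "(\<Sum>i<n. - real_of_int (v i) * z i * z i) = (\<Sum>i<n. - real_of_int (v i) * \<bar>z i\<bar> * \<bar>z i\<bar>)"
    by (rule sum.cong) (auto simp: abs_mult_self_eq mult.assoc)
  ultimately show ?thesis unfolding LL_formula by linarith
qed

lemma core:
  fixes w u xx yy :: "nat \<Rightarrow> real"
  assumes v: "\<forall>i<n. v i \<ge> 2"
    and xx: "\<forall>i<n. xx i = LL n v w i" and yy: "\<forall>i<n. yy i = LL n v u i"
    and yneg: "\<forall>i<n. yy i \<le> 0"
    and le: "\<forall>i<n. \<bar>xx i\<bar> \<le> \<bar>yy i\<bar>" and i0: "i0 < n" "\<bar>xx i0\<bar> < \<bar>yy i0\<bar>"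
  shows "(\<Sum>i<n. u i * LL n v u i) < (\<Sum>i<n. w i * LL n v w i)"
proof -
  define a where "a = (\<lambda>i. \<bar>w i\<bar>)"
  define d where "d = (\<lambda>i. u i - a i)"
  have "(\<Sum>i<n. d i * LL n v d i) = (\<Sum>i<n. u i * LL n v u i - u i * LL n v a i - a i * LL n v u i + a i * LL n v a i)"
    unfolding d_def LL_diff by (rule sum.cong) (auto simp: algebra_simps)
  also have "\<dots> = (\<Sum>i<n. u i * LL n v u i) - (\<Sum>i<n. u i * LL n v a i) - (\<Sum>i<n. a i * LL n v u i) + (\<Sum>i<n. a i * LL n v a i)"
    by (simp add: sum.distrib sum_subtractf)
  finally have e1: "(\<Sum>i<n. d i * LL n v d i) = (\<Sum>i<n. u i * LL n v u i) - (\<Sum>i<n. u i * LL n v a i) - (\<Sum>i<n. a i * LL n v u i) + (\<Sum>i<n. a i * LL n v a i)" .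
  have e2: "(\<Sum>i<n. u i * LL n v a i) = (\<Sum>i<n. a i * LL n v u i)" by (rule LL_sym)
  have e3: "(\<Sum>i<n. a i * LL n v u i) = (\<Sum>i<n. a i * yy i)"
    by (rule sum.cong) (use yy in auto)
  have e4: "(\<Sum>i<n. w i * LL n v w i) = (\<Sum>i<n. w i * xx i)"
    by (rule sum.cong) (use xx in auto)
  have N1: "(\<Sum>i<n. d i * LL n v d i) \<le> 0" by (rule NN_le(1)[OF v])
  have N2: "(\<Sum>i<n. w i * LL n v w i) \<le> (\<Sum>i<n. a i * LL n v a i)"
    unfolding a_def by (rule NN_abs)
  have tm: "a i * yy i \<le> w i * xx i" if "i < n" for i
  proof -
    have "a i * yy i = - (\<bar>w i\<bar> * \<bar>yy i\<bar>)" using yneg that unfolding a_def by (simp add: abs_of_nonpos)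
    also have "\<dots> \<le> - (\<bar>w i\<bar> * \<bar>xx i\<bar>)" using le that by (simp add: mult_left_mono)
    also have "\<dots> \<le> w i * xx i" by (simp add: abs_mult[symmetric])
    finally show ?thesis .
  qed
  have S1: "(\<Sum>i<n. a i * yy i) \<le> (\<Sum>i<n. w i * xx i)"
    by (rule sum_mono) (use tm in auto)
  have strict: "2 * (\<Sum>i<n. a i * yy i) + (\<Sum>i<n. d i * LL n v d i) < 2 * (\<Sum>i<n. w i * xx i)"
  proof (cases "w i0 = 0")
    case False
    have "a i0 * yy i0 < w i0 * xx i0"
    proof -
      have "a i0 * yy i0 = - (\<bar>w i0\<bar> * \<bar>yy i0\<bar>)" using yneg i0 unfolding a_def by (simp add: abs_of_nonpos)
      also have "\<dots> < - (\<bar>w i0\<bar> * \<bar>xx i0\<bar>)" using i0 False by simp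
      also have "\<dots> \<le> w i0 * xx i0" by (simp add: abs_mult[symmetric])
      finally show ?thesis .
    qed
    then have "(\<Sum>i<n. a i * yy i) < (\<Sum>i<n. w i * xx i)"
      by (intro sum_strict_mono_ex1) (use tm i0 in auto)
    then show ?thesis using N1 by linarith
  next
    case True
    have "(\<Sum>i<n. d i * LL n v d i) \<noteq> 0"
    proof
      assume "(\<Sum>i<n. d i * LL n v d i) = 0"
      then have "\<forall>i<n. d i = 0" by (rule NN_le(2)[OF v])
      then have ua: "\<forall>i<n. u i = a i" unfolding d_def by auto
      have "LL n v u i0 = LL n v a i0"
        unfolding LL_def using ua i0 by auto
      also have "\<dots> \<ge> 0" unfolding LL_def a_def using True by simp
      finally have "yy i0 \<ge> 0" using yy i0 by auto
      then show False using yneg i0 by auto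
    qed
    then show ?thesis using N1 S1 by linarith
  qed
  show ?thesis using e1 e2 e3 e4 N2 strict by linarith
qed


lemma Q_carrier: "tridiag_Q n v \<in> carrier_mat n n"
  by (simp add: tridiag_Q_def)

lemma Q_mv:
  assumes z: "z \<in> carrier_vec n" and i: "i < n"
  shows "(tridiag_Q n v *\<^sub>v z) $ i = LL n v (\<lambda>j. z $ j) i"
proof -
  have "(tridiag_Q n v *\<^sub>v z) $ i = (\<Sum>j<n. (tridiag_Q n v $$ (i, j)) * z $ j)"
    using z i by (simp add: mult_mat_vec_def scalar_prod_def tridiag_Q_def atLeast0LessThan)
  also have "\<dots> = (\<Sum>j<n. (if j = i then - real_of_int (v i) * z $ j else 0)
      + (if j = i + 1 then z $ j else 0) + (if j = i - 1 then (if 0 < i then z $ j else 0) else 0))"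
    by (rule sum.cong) (use i in \<open>auto simp: tridiag_Q_def\<close>)
  also have "\<dots> = LL n v (\<lambda>j. z $ j) i"
    using i by (simp add: sum.distrib LL_def)
  finally show ?thesis .
qed

lemma Q_inv:
  assumes v: "\<forall>i<n. v i \<ge> 2"
  shows "mat_inv n (tridiag_Q n v) \<in> carrier_mat n n
    \<and> tridiag_Q n v * mat_inv n (tridiag_Q n v) = 1\<^sub>m n
    \<and> mat_inv n (tridiag_Q n v) * tridiag_Q n v = 1\<^sub>m n"
proof -
  let ?Q = "tridiag_Q n v"
  have Qc: "?Q \<in> carrier_mat n n" by (rule Q_carrier)
  have inj: "z = 0\<^sub>v n" if z: "z \<in> carrier_vec n" and qz: "?Q *\<^sub>v z = 0\<^sub>v n" for z
  proof -
    have "0 = z \<bullet> (?Q *\<^sub>v z)" using qz z by simp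
    also have "\<dots> = (\<Sum>i<n. z $ i * (?Q *\<^sub>v z) $ i)"
      using z Qc by (simp only: scalar_prod_def atLeast0LessThan dim_mult_mat_vec carrier_matD)
    also have "\<dots> = (\<Sum>i<n. z $ i * LL n v (\<lambda>j. z $ j) i)"
      using z by (intro sum.cong) (auto simp: Q_mv)
    finally have "\<forall>i<n. z $ i = 0" using NN_le(2)[OF v] by metis
    then show ?thesis using z by (intro eq_vecI) auto
  qed
  have "det ?Q \<noteq> 0"
    using inj det_0_iff_vec_prod_zero_field[OF Qc] by blast
  from det_non_zero_imp_unit[OF Qc this, of "()"]
  obtain B where B: "B \<in> carrier_mat n n" and BQ: "B * ?Q = 1\<^sub>m n" and QB: "?Q * B = 1\<^sub>m n"
    unfolding Units_def ring_mat_def by auto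
  have "mat_inv n ?Q = B"
    unfolding mat_inv_def
  proof (rule the_equality)
    show "B \<in> carrier_mat n n \<and> inverts_mat ?Q B \<and> inverts_mat B ?Q"
      using B BQ QB Qc by (simp add: inverts_mat_def)
  next
    fix B' assume h: "B' \<in> carrier_mat n n \<and> inverts_mat ?Q B' \<and> inverts_mat B' ?Q"
    then have B': "B' \<in> carrier_mat n n" and B'Q: "B' * ?Q = 1\<^sub>m n"
      using Qc by (auto simp: inverts_mat_def)
    have "B' = B' * (?Q * B)" using B' QB by simp
    also have "\<dots> = (B' * ?Q) * B" using B' Qc B by (simp add: assoc_mult_mat)
    also have "\<dots> = B" using B'Q B by simp
    finally show "B' = B" .
  qed
  then show ?thesis using B BQ QB by simp
qed

theorem proposition3p3:
  fixes n :: nat and v :: "nat \<Rightarrow> int" and x :: "real vec"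
  assumes "\<forall>i<n. v i \<ge> 2"
    and "x \<in> carrier_vec n"
    and "\<forall>i<n. \<bar>x $ i\<bar> \<le> \<bar>yvec n v $ i\<bar>"
    and "\<exists>i0<n. \<bar>x $ i0\<bar> < \<bar>yvec n v $ i0\<bar>"
  shows "qf n v x > qf n v (yvec n v)"
proof -
  note v = assms(1) and xc = assms(2)
  let ?Q = "tridiag_Q n v"
  let ?B = "mat_inv n ?Q"
  let ?y = "yvec n v"
  have Qc: "?Q \<in> carrier_mat n n" by (rule Q_carrier)
  have Bc: "?B \<in> carrier_mat n n" and QB: "?Q * ?B = 1\<^sub>m n" using Q_inv[OF v] by auto
  have yc: "?y \<in> carrier_vec n" by (simp add: yvec_def)
  define w where "w = ?B *\<^sub>v x"
  define u where "u = ?B *\<^sub>v ?y"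
  have wc: "w \<in> carrier_vec n" unfolding w_def by (rule mult_mat_vec_carrier[OF Bc xc])
  have uc: "u \<in> carrier_vec n" unfolding u_def by (rule mult_mat_vec_carrier[OF Bc yc])
  have Qw: "?Q *\<^sub>v w = x"
  proof -
    have "?Q *\<^sub>v w = (?Q * ?B) *\<^sub>v x" unfolding w_def
      by (rule assoc_mult_mat_vec[symmetric, OF Qc Bc xc])
    also have "\<dots> = x" by (simp only: QB one_mult_mat_vec[OF xc])
    finally show ?thesis .
  qed
  have Qu: "?Q *\<^sub>v u = ?y"
  proof -
    have "?Q *\<^sub>v u = (?Q * ?B) *\<^sub>v ?y" unfolding u_def
      by (rule assoc_mult_mat_vec[symmetric, OF Qc Bc yc])
    also have "\<dots> = ?y" by (simp only: QB one_mult_mat_vec[OF yc])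
    finally show ?thesis .
  qed
  have xx: "\<forall>i<n. x $ i = LL n v (\<lambda>j. w $ j) i"
  proof (intro allI impI)
    fix i assume "i < n"
    then show "x $ i = LL n v (\<lambda>j. w $ j) i" using Q_mv[OF wc \<open>i < n\<close>, of v] Qw by simp
  qed
  have yy: "\<forall>i<n. ?y $ i = LL n v (\<lambda>j. u $ j) i"
  proof (intro allI impI)
    fix i assume "i < n"
    then show "?y $ i = LL n v (\<lambda>j. u $ j) i" using Q_mv[OF uc \<open>i < n\<close>, of v] Qu by simp
  qed
  have qx: "qf n v x = (\<Sum>i<n. w $ i * LL n v (\<lambda>j. w $ j) i)"
  proof -
    have "qf n v x = (\<Sum>i<n. x $ i * w $ i)"
      unfolding qf_def w_def[symmetric] using wc
      by (simp only: scalar_prod_def atLeast0LessThan carrier_vecD)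
    also have "\<dots> = (\<Sum>i<n. w $ i * LL n v (\<lambda>j. w $ j) i)"
      by (rule sum.cong) (use xx in auto)
    finally show ?thesis .
  qed
  have qy: "qf n v ?y = (\<Sum>i<n. u $ i * LL n v (\<lambda>j. u $ j) i)"
  proof -
    have "qf n v ?y = (\<Sum>i<n. ?y $ i * u $ i)"
      unfolding qf_def u_def[symmetric] using uc
      by (simp only: scalar_prod_def atLeast0LessThan carrier_vecD)
    also have "\<dots> = (\<Sum>i<n. u $ i * LL n v (\<lambda>j. u $ j) i)"
      by (rule sum.cong) (use yy in auto)
    finally show ?thesis .
  qed
  have yneg: "\<forall>i<n. ?y $ i \<le> 0" using v by (simp add: yvec_def)
  obtain i0 where i0: "i0 < n" "\<bar>x $ i0\<bar> < \<bar>?y $ i0\<bar>" using assms(4) by blast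
  show ?thesis unfolding qx qy
    by (rule core[OF v xx yy yneg assms(3) i0])
qed

end
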